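(* Let $\epsilon,\delta>0$, let $H$ be a harmonic function on $\mathbb{R}^2$ with $\nabla H(x,y)=\nabla H(x,y+2+\delta)$ for all $(x,y)$, and let $u$ be a solution for $H$ (in the sense of the context). Then $u$ is constant on each $\partial D_{Ln}$ and $\partial D_{Rn}$, and for every integer $n$, $$u|_{\partial D_{R,n+1}}-u|_{\partial D_{Rn}}=u|_{\partial D_{L,n+1}}-u|_{\partial D_{Ln}}=H\big(0,1+\tfrac{\delta}{2}\big)-H\big(0,-1-\tfrac{\delta}{2}\big).$$
   Context: For each integer $n$, $D_{Rn}$ is the open unit disk centered at $(1+\frac{\epsilon}{2},\,n(2+\delta))$ and $D_{Ln}$ is the open unit disk centered at $(-1-\frac{\epsilon}{2},\,n(2+\delta))$; $\mathcal D=\bigcup_{n}(D_{Ln}\cup D_{Rn})$; $\Omega=\mathbb{R}\times(-1-\frac{\delta}{2},1+\frac{\delta}{2})$; $\nu$ is the unit normal on disk boundaries pointing into the disk. A solution for $H$ is a function $u$ harmonic in $\mathbb{R}^2\setminus\overline{\mathcal D}$ with: $u$ constant on $\partial D_{L0}$ and on $\partial D_{R0}$; $\int_{\partial D_{L0}}\partial_\nu u\,ds=\int_{\partial D_{R0}}\partial_\nu u\,ds=0$; $\int_{\Omega\setminus\overline{D_{L0}\cup D_{R0}}}|\nabla(u-H)|^2<\infty$; $\nabla u(x,y)=\nabla u(x,y+2+\delta)$ on $\mathbb{R}^2\setminus\overline{\mathcal D}$. For a set on which $u$ is constant, $u|_{\partial D}$ denotes that constant value. *)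

theory Defs
  imports "HOL-Analysis.Analysis"
begin

definition px :: "(real \<times> real \<Rightarrow> real) \<Rightarrow> real \<times> real \<Rightarrow> real" where
  "px u p = deriv (\<lambda>t. u (t, snd p)) (fst p)"

definition py :: "(real \<times> real \<Rightarrow> real) \<Rightarrow> real \<times> real \<Rightarrow> real" where
  "py u p = deriv (\<lambda>t. u (fst p, t)) (snd p)"

definition harmonic_on :: "(real \<times> real) set \<Rightarrow> (real \<times> real \<Rightarrow> real) \<Rightarrow> bool" where
  "harmonic_on S u \<longleftrightarrow> open S
     \<and> (\<forall>p\<in>S. u differentiable (at p))
     \<and> (\<forall>p\<in>S. px u differentiable (at p) \<and> py u differentiable (at p))
     \<and> continuous_on S (px (px u)) \<and> continuous_on S (py (px u))
     \<and> continuous_on S (px (py u)) \<and> continuous_on S (py (py u))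
     \<and> (\<forall>p\<in>S. px (px u) p + py (py u) p = 0)"

definition cR :: "real \<Rightarrow> real \<Rightarrow> int \<Rightarrow> real \<times> real" where
  "cR \<epsilon> \<delta> n = (1 + \<epsilon>/2, real_of_int n * (2 + \<delta>))"

definition cL :: "real \<Rightarrow> real \<Rightarrow> int \<Rightarrow> real \<times> real" where
  "cL \<epsilon> \<delta> n = (-1 - \<epsilon>/2, real_of_int n * (2 + \<delta>))"

definition disks :: "real \<Rightarrow> real \<Rightarrow> (real \<times> real) set" where
  "disks \<epsilon> \<delta> = (\<Union>n. ball (cL \<epsilon> \<delta> n) 1 \<union> ball (cR \<epsilon> \<delta> n) 1)"

definition strip :: "real \<Rightarrow> (real \<times> real) set" where
  "strip \<delta> = UNIV \<times> {-1 - \<delta>/2 <..< 1 + \<delta>/2}"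

text \<open>Flux of u through the circle of radius r around c, with respect to the normal
  pointing into the disk (i.e. towards c): integral of the normal derivative, ds = r dt.\<close>
definition flux_in :: "(real \<times> real \<Rightarrow> real) \<Rightarrow> real \<times> real \<Rightarrow> real \<Rightarrow> real" where
  "flux_in u c r = integral {0..2*pi} (\<lambda>t.
     r * (- (px u (c + r *\<^sub>R (cos t, sin t)) * cos t
             + py u (c + r *\<^sub>R (cos t, sin t)) * sin t)))"

definition solution_for :: "real \<Rightarrow> real \<Rightarrow> (real \<times> real \<Rightarrow> real) \<Rightarrow> (real \<times> real \<Rightarrow> real) \<Rightarrow> bool" where
  "solution_for \<epsilon> \<delta> H u \<longleftrightarrow>
     harmonic_on (- closure (disks \<epsilon> \<delta>)) u
     \<and> continuous_on (- disks \<epsilon> \<delta>) u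
     \<and> (\<exists>a. \<forall>p\<in>sphere (cL \<epsilon> \<delta> 0) 1. u p = a)
     \<and> (\<exists>b. \<forall>p\<in>sphere (cR \<epsilon> \<delta> 0) 1. u p = b)
     \<and> ((\<lambda>r. flux_in u (cL \<epsilon> \<delta> 0) r) \<longlongrightarrow> 0) (at_right 1)
     \<and> ((\<lambda>r. flux_in u (cR \<epsilon> \<delta> 0) r) \<longlongrightarrow> 0) (at_right 1)
     \<and> (\<integral>\<^sup>+ p. ennreal (indicator (strip \<delta> - closure (ball (cL \<epsilon> \<delta> 0) 1 \<union> ball (cR \<epsilon> \<delta> 0) 1)) p
            * ((px u p - px H p)\<^sup>2 + (py u p - py H p)\<^sup>2)) \<partial>lborel) < \<infinity>
     \<and> (\<forall>x y. (x, y) \<notin> closure (disks \<epsilon> \<delta>) \<longrightarrow>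
           px u (x, y) = px u (x, y + 2 + \<delta>) \<and> py u (x, y) = py u (x, y + 2 + \<delta>))"

end

theory Submission
  imports Defs
begin


lemma diff_partials:
  fixes f :: "real \<times> real \<Rightarrow> real"
  assumes "f differentiable (at p)"
  shows "(f has_derivative (\<lambda>h. px f p * fst h + py f p * snd h)) (at p)"
proof -
  obtain D where D: "(f has_derivative D) (at p)" using assms differentiable_def by blast
  have lin: "linear D" using D has_derivative_linear by blast
  obtain x y where p: "p = (x, y)" by (cases p)
  have Dsc1: "D (s, 0) = s * D (1, 0)" for s
    using linear_scale[OF lin, of s "(1,0)"] by simp
  have Dsc2: "D (0, s) = s * D (0, 1)" for s
    using linear_scale[OF lin, of s "(0,1)"] by simp
  have h1: "((\<lambda>t. (t, y)) has_derivative (\<lambda>s. (s, 0))) (at x)"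
    by (auto intro!: derivative_eq_intros)
  have h2: "((\<lambda>t. (x, t)) has_derivative (\<lambda>s. (0, s))) (at y)"
    by (auto intro!: derivative_eq_intros)
  have c1: "((\<lambda>t. f (t, y)) has_derivative (\<lambda>s. D (s, 0))) (at x)"
    using has_derivative_compose[OF h1, of f D] D p by (simp add: o_def)
  have c2: "((\<lambda>t. f (x, t)) has_derivative (\<lambda>s. D (0, s))) (at y)"
    using has_derivative_compose[OF h2, of f D] D p by (simp add: o_def)
  have d1: "((\<lambda>t. f (t, y)) has_real_derivative D (1, 0)) (at x)"
  proof -
    have "(\<lambda>s. D (s, 0)) = (*) (D (1, 0))" by (rule ext) (metis Dsc1 mult.commute)
    then show ?thesis unfolding has_field_derivative_def using c1 by simp
  qed
  have d2: "((\<lambda>t. f (x, t)) has_real_derivative D (0, 1)) (at y)"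
  proof -
    have "(\<lambda>s. D (0, s)) = (*) (D (0, 1))" by (rule ext) (metis Dsc2 mult.commute)
    then show ?thesis unfolding has_field_derivative_def using c2 by simp
  qed
  have pxe: "px f p = D (1, 0)" unfolding px_def p using DERIV_imp_deriv[OF d1] by simp
  have pye: "py f p = D (0, 1)" unfolding py_def p using DERIV_imp_deriv[OF d2] by simp
  have Deq: "D h = fst h * D (1,0) + snd h * D (0,1)" for h
  proof -
    have "D h = D ((fst h, 0) + (0, snd h))" by simp
    also have "\<dots> = D (fst h, 0) + D (0, snd h)" using linear_add[OF lin] by blast
    finally show ?thesis using Dsc1[of "fst h"] Dsc2[of "snd h"] by simp
  qed
  have "D = (\<lambda>h. px f p * fst h + py f p * snd h)"
  proof
    fix h show "D h = px f p * fst h + py f p * snd h"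
      using Deq[of h] pxe pye by (simp add: mult.commute)
  qed
  then show ?thesis using D by simp
qed



definition goodxy :: "real \<Rightarrow> real \<Rightarrow> real \<Rightarrow> real \<Rightarrow> bool" where
  "goodxy \<epsilon> \<delta> x y \<longleftrightarrow> (\<forall>n::int. 1 < (x - (1+\<epsilon>/2))\<^sup>2 + (y - of_int n*(2+\<delta>))\<^sup>2
                          \<and> 1 < (x + (1+\<epsilon>/2))\<^sup>2 + (y - of_int n*(2+\<delta>))\<^sup>2)"

lemma dist_gt1: "1 < dist (x,y) (a::real,b::real) \<longleftrightarrow> 1 < (x-a)\<^sup>2 + (y-b)\<^sup>2"
  by (simp add: dist_Pair_Pair dist_real_def)

lemma rowsep:
  fixes n k :: int and T :: real
  assumes "n \<noteq> k" "T > 0"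
  shows "T \<le> \<bar>of_int n * T - of_int k * T\<bar>"
proof -
  have "1 \<le> \<bar>of_int n - (of_int k::real)\<bar>" using assms(1)
    by (metis of_int_1_le_iff of_int_abs of_int_diff zero_less_abs_iff right_minus_eq int_one_le_iff_zero_less)
  then have "1 * T \<le> \<bar>of_int n - of_int k\<bar> * T" using assms(2) by (intro mult_right_mono) auto
  also have "\<dots> = \<bar>of_int n * T - of_int k * T\<bar>" using assms(2) by (simp add: abs_mult left_diff_distrib[symmetric])
  finally show ?thesis by simp
qed

lemma S_iff:
  assumes "\<delta> > 0"
  shows "(x,y) \<notin> closure (disks \<epsilon> \<delta>) \<longleftrightarrow> goodxy \<epsilon> \<delta> x y"
proof
  assume h: "(x,y) \<notin> closure (disks \<epsilon> \<delta>)"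
  show "goodxy \<epsilon> \<delta> x y" unfolding goodxy_def
  proof
    fix n :: int
    have "ball (cL \<epsilon> \<delta> n) 1 \<subseteq> disks \<epsilon> \<delta>" "ball (cR \<epsilon> \<delta> n) 1 \<subseteq> disks \<epsilon> \<delta>"
      unfolding disks_def by auto
    then have "cball (cL \<epsilon> \<delta> n) 1 \<subseteq> closure (disks \<epsilon> \<delta>)" "cball (cR \<epsilon> \<delta> n) 1 \<subseteq> closure (disks \<epsilon> \<delta>)"
      using closure_mono closure_ball[of 1] by (metis zero_less_one)+
    then have "(x,y) \<notin> cball (cL \<epsilon> \<delta> n) 1" "(x,y) \<notin> cball (cR \<epsilon> \<delta> n) 1" using h by auto
    then have "1 < dist (x,y) (cL \<epsilon> \<delta> n)" "1 < dist (x,y) (cR \<epsilon> \<delta> n)"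
      by (auto simp: dist_commute)
    then show "1 < (x - (1+\<epsilon>/2))\<^sup>2 + (y - of_int n*(2+\<delta>))\<^sup>2
                          \<and> 1 < (x + (1+\<epsilon>/2))\<^sup>2 + (y - of_int n*(2+\<delta>))\<^sup>2"
      unfolding cL_def cR_def dist_gt1 by (simp add: algebra_simps)
  qed
next
  assume g: "goodxy \<epsilon> \<delta> x y"
  define T where "T = 2 + \<delta>"
  have T: "T > 0" using assms T_def by simp
  define k where "k = \<lfloor>y / T + 1/2\<rfloor>"
  have k1: "of_int k * T - T/2 \<le> y" 
  proof -
    have "of_int k \<le> y / T + 1/2" unfolding k_def by linarith
    then have "of_int k * T \<le> (y / T + 1/2) * T" using T by (intro mult_right_mono) auto
    then show ?thesis using T by (simp add: algebra_simps)
  qed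
  have k2: "y < of_int k * T + T/2"
  proof -
    have "y / T + 1/2 < of_int k + 1" unfolding k_def by linarith
    then have "(y / T + 1/2) * T < (of_int k + 1) * T" using T by (intro mult_strict_right_mono) auto
    then show ?thesis using T by (simp add: algebra_simps)
  qed
  have far: "T/2 \<le> \<bar>y - of_int n * T\<bar>" if "n \<noteq> k" for n
    using rowsep[OF that T] k1 k2 by linarith
  define dL where "dL = dist (x,y) (cL \<epsilon> \<delta> k)"
  define dR where "dR = dist (x,y) (cR \<epsilon> \<delta> k)"
  have gk: "1 < dL" "1 < dR" using g unfolding goodxy_def dL_def dR_def cL_def cR_def dist_gt1 T_def
    by (auto simp: algebra_simps)
  define r where "r = min (\<delta>/2) (min (dL - 1) (dR - 1))"
  have r: "r > 0" using gk assms r_def by auto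
  have big: "1 + r \<le> dist (x,y) c" if "c = cL \<epsilon> \<delta> n \<or> c = cR \<epsilon> \<delta> n" for c n
  proof (cases "n = k")
    case True then show ?thesis using that r_def dL_def dR_def by auto
  next
    case False
    have "T/2 \<le> \<bar>y - snd c\<bar>" using far[OF False] that unfolding cL_def cR_def T_def by auto
    also have "\<dots> \<le> dist (x,y) c" using dist_snd_le[of "(x,y)" c] by (simp add: dist_real_def)
    finally show ?thesis using r_def T_def by auto
  qed
  have disj: "ball (x,y) r \<inter> disks \<epsilon> \<delta> = {}"
  proof (rule ccontr)
    assume "ball (x,y) r \<inter> disks \<epsilon> \<delta> \<noteq> {}"
    then obtain q where q0: "q \<in> ball (x,y) r" "q \<in> disks \<epsilon> \<delta>" by blast
    then obtain n where "q \<in> ball (cL \<epsilon> \<delta> n) 1 \<or> q \<in> ball (cR \<epsilon> \<delta> n) 1"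
      unfolding disks_def by blast
    then obtain c where q: "dist (x,y) q < r" "c = cL \<epsilon> \<delta> n \<or> c = cR \<epsilon> \<delta> n" "dist c q < 1"
      using q0 by (metis mem_ball)
    have "dist (x,y) c \<le> dist (x,y) q + dist q c" by (rule dist_triangle)
    then show False using big[OF q(2)] q by (simp add: dist_commute)
  qed
  have "closure (disks \<epsilon> \<delta>) \<subseteq> - ball (x,y) r"
    using disj by (intro closure_minimal) auto
  then show "(x,y) \<notin> closure (disks \<epsilon> \<delta>)" using r by auto
qed

lemma goodxy_alt:
  assumes "A = 1+\<epsilon>/2" "T = 2+\<delta>"
  shows "goodxy \<epsilon> \<delta> x y \<longleftrightarrow> (\<forall>n::int. 1 < (x - A)\<^sup>2 + (y - of_int n*T)\<^sup>2 \<and> 1 < (x + A)\<^sup>2 + (y - of_int n*T)\<^sup>2)"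
  using assms by (simp add: goodxy_def)

lemma farrow:
  fixes n k :: int and z T h :: real
  assumes "\<bar>z - of_int k * T\<bar> \<le> h" "n \<noteq> k" "T > 0"
  shows "T - h \<le> \<bar>z - of_int n * T\<bar>"
  using rowsep[OF assms(2,3)] assms(1) by linarith

lemma sq_gt1: "1 < \<bar>z::real\<bar> \<Longrightarrow> 0 \<le> w \<Longrightarrow> 1 < w + z\<^sup>2"
proof -
  assume "1 < \<bar>z\<bar>" "0 \<le> w"
  then have "1 < \<bar>z\<bar>\<^sup>2" by (intro one_less_power) auto
  then show ?thesis using \<open>0 \<le> w\<close> by simp
qed

lemma sq_gt1': "1 < \<bar>z::real\<bar> \<Longrightarrow> 0 \<le> w \<Longrightarrow> 1 < z\<^sup>2 + w"
  using sq_gt1[of z w] by (simp add: add.commute)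

lemma sq_mono_abs: "\<bar>a::real\<bar> \<le> \<bar>b\<bar> \<Longrightarrow> a\<^sup>2 \<le> b\<^sup>2"
  by (simp add: abs_le_square_iff)

lemma path_const:
  fixes g :: "real \<times> real \<Rightarrow> real" and \<epsilon> \<delta> :: real
  assumes ep: "\<epsilon> > 0" and de: "\<delta> > 0"
  and gv: "\<And>x a b. a \<le> b \<Longrightarrow> (\<forall>t\<in>{a..b}. goodxy \<epsilon> \<delta> x t) \<Longrightarrow> g (x,a) = g (x,b)"
  and gh: "\<And>y a b. a \<le> b \<Longrightarrow> (\<forall>s\<in>{a..b}. goodxy \<epsilon> \<delta> s y) \<Longrightarrow> g (a,y) = g (b,y)"
  and gxy: "goodxy \<epsilon> \<delta> x y"
  shows "g (x,y) = g (0,0)"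
proof -
  define A where "A = 1+\<epsilon>/2"
  define T where "T = 2+\<delta>"
  have A: "A > 1" using ep A_def by simp
  have T: "T > 2" using de T_def by simp
  note G = goodxy_alt[OF A_def T_def]
  have gv': "g (x,a) = g (x,b)" if "\<forall>t. min a b \<le> t \<and> t \<le> max a b \<longrightarrow> goodxy \<epsilon> \<delta> x t" for x a b
  proof (cases "a \<le> b")
    case True then show ?thesis using gv[of a b x] that by auto
  next
    case False then show ?thesis using gv[of b a x] that by auto
  qed
  have gh': "g (a,y) = g (b,y)" if "\<forall>s. min a b \<le> s \<and> s \<le> max a b \<longrightarrow> goodxy \<epsilon> \<delta> s y" for y a b
  proof (cases "a \<le> b")
    case True then show ?thesis using gh[of a b y] that by auto
  next
    case False then show ?thesis using gh[of b a y] that by auto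
  qed
  have V: "goodxy \<epsilon> \<delta> x' t" if "1 < \<bar>x' - A\<bar>" "1 < \<bar>x' + A\<bar>" for x' t
    unfolding G using that by (auto intro!: sq_gt1')
  have Hl: "goodxy \<epsilon> \<delta> x' (of_int m * T + T/2)" for x' m
    unfolding G
  proof
    fix n :: int
    have "1 < \<bar>of_int m * T + T/2 - of_int n * T\<bar>"
    proof (cases "n = m")
      case True then show ?thesis using T by simp
    next
      case False
      have "T - T/2 \<le> \<bar>of_int m * T + T/2 - of_int n * T\<bar>"
        by (rule farrow[OF _ False]) (use T in auto)
      then show ?thesis using T by simp
    qed
    then show "1 < (x' - A)\<^sup>2 + (of_int m * T + T / 2 - of_int n * T)\<^sup>2 \<and>
          1 < (x' + A)\<^sup>2 + (of_int m * T + T / 2 - of_int n * T)\<^sup>2"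
      by (auto intro!: sq_gt1)
  qed
  have base: "g (x', y') = g (0,0)" if "1 < \<bar>x' - A\<bar>" "1 < \<bar>x' + A\<bar>" for x' y'
  proof -
    have Hl0: "goodxy \<epsilon> \<delta> s (T/2)" for s using Hl[of s 0] by simp
    have "g (x',y') = g (x', T/2)" by (rule gv') (use V[OF that] in auto)
    also have "\<dots> = g (0, T/2)" by (rule gh') (use Hl0 in auto)
    also have "\<dots> = g (0, 0)" by (rule gv') (use V[of 0] A in auto)
    finally show ?thesis .
  qed
  have hl: "g (x', of_int m * T + T/2) = g (0,0)" for x' m
  proof -
    have "g (x', of_int m * T + T/2) = g (0, of_int m * T + T/2)" by (rule gh') (use Hl in auto)
    also have "\<dots> = g (0, 0)" by (rule base) (use A in auto)
    finally show ?thesis .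
  qed
  define k where "k = \<lfloor>y / T + 1/2\<rfloor>"
  have k1: "of_int k * T - T/2 \<le> y" 
  proof -
    have "of_int k \<le> y / T + 1/2" unfolding k_def by linarith
    then have "of_int k * T \<le> (y / T + 1/2) * T" using T by (intro mult_right_mono) auto
    then show ?thesis using T by (simp add: algebra_simps)
  qed
  have k2: "y < of_int k * T + T/2"
  proof -
    have "y / T + 1/2 < of_int k + 1" unfolding k_def by linarith
    then have "(y / T + 1/2) * T < (of_int k + 1) * T" using T by (intro mult_strict_right_mono) auto
    then show ?thesis using T by (simp add: algebra_simps)
  qed
  have gk: "1 < (x - A)\<^sup>2 + (y - of_int k*T)\<^sup>2" "1 < (x + A)\<^sup>2 + (y - of_int k*T)\<^sup>2"
    using gxy unfolding G by auto
  consider "1 \<le> y - of_int k * T" | "y - of_int k * T \<le> -1" | "\<bar>y - of_int k * T\<bar> < 1" by linarith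
  then show ?thesis
  proof cases
    case 1
    have "g (x,y) = g (x, of_int k * T + T/2)"
    proof (rule gv', intro allI impI)
      fix t assume t: "min y (of_int k * T + T / 2) \<le> t \<and> t \<le> max y (of_int k * T + T / 2)"
      show "goodxy \<epsilon> \<delta> x t" unfolding G
      proof
        fix n :: int
        show "1 < (x - A)\<^sup>2 + (t - of_int n*T)\<^sup>2 \<and> 1 < (x + A)\<^sup>2 + (t - of_int n*T)\<^sup>2"
        proof (cases "n = k")
          case True
          have "(y - of_int k*T)\<^sup>2 \<le> (t - of_int k*T)\<^sup>2" using 1 t k2 by (intro sq_mono_abs) auto
          then show ?thesis using gk True by auto
        next
          case False
          have "T - T/2 \<le> \<bar>t - of_int n * T\<bar>" by (rule farrow[OF _ False]) (use T t 1 k2 in auto)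
          then have "1 < \<bar>t - of_int n * T\<bar>" using T by simp
          then show ?thesis by (auto intro!: sq_gt1)
        qed
      qed
    qed
    also have "\<dots> = g (0,0)" by (rule hl)
    finally show ?thesis .
  next
    case 2
    have "g (x,y) = g (x, of_int (k-1) * T + T/2)"
    proof (rule gv', intro allI impI)
      fix t assume t: "min y (of_int (k-1) * T + T / 2) \<le> t \<and> t \<le> max y (of_int (k-1) * T + T / 2)"
      have t': "of_int k * T - T/2 \<le> t" "t \<le> y" using t 2 k1 by (auto simp: algebra_simps)
      show "goodxy \<epsilon> \<delta> x t" unfolding G
      proof
        fix n :: int
        show "1 < (x - A)\<^sup>2 + (t - of_int n*T)\<^sup>2 \<and> 1 < (x + A)\<^sup>2 + (t - of_int n*T)\<^sup>2"
        proof (cases "n = k")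
          case True
          have "(y - of_int k*T)\<^sup>2 \<le> (t - of_int k*T)\<^sup>2" using 2 t' by (intro sq_mono_abs) auto
          then show ?thesis using gk True by auto
        next
          case False
          have "T - T/2 \<le> \<bar>t - of_int n * T\<bar>" by (rule farrow[OF _ False]) (use T t' 2 in auto)
          then have "1 < \<bar>t - of_int n * T\<bar>" using T by simp
          then show ?thesis by (auto intro!: sq_gt1)
        qed
      qed
    qed
    also have "\<dots> = g (0,0)" by (rule hl)
    finally show ?thesis .
  next
    case 3
    have other: "1 < \<bar>y - of_int n * T\<bar>" if "n \<noteq> k" for n
    proof -
      have "T - 1 \<le> \<bar>y - of_int n * T\<bar>" by (rule farrow[OF _ that]) (use T 3 in auto)
      then show ?thesis using T by simp
    qed
    have hor: "goodxy \<epsilon> \<delta> s y" if "1 < (s - A)\<^sup>2 + (y - of_int k*T)\<^sup>2" "1 < (s + A)\<^sup>2 + (y - of_int k*T)\<^sup>2" for s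
      unfolding G
    proof
      fix n :: int show "1 < (s - A)\<^sup>2 + (y - of_int n*T)\<^sup>2 \<and> 1 < (s + A)\<^sup>2 + (y - of_int n*T)\<^sup>2"
        using that other[of n] by (cases "n = k") (auto intro!: sq_gt1)
    qed
    consider "0 \<le> x" "x \<le> A" | "x < 0" "-A \<le> x" | "A < x" | "x < -A" by linarith
    then show ?thesis
    proof cases
      case 1
      have "g (x,y) = g (0,y)"
      proof (rule gh', intro allI impI hor)
        fix s assume s: "min x 0 \<le> s \<and> s \<le> max x 0"
        have "(x - A)\<^sup>2 \<le> (s - A)\<^sup>2" using s 1 by (intro sq_mono_abs) auto
        then show "1 < (s - A)\<^sup>2 + (y - of_int k*T)\<^sup>2" using gk by auto
        have "1 < \<bar>s + A\<bar>" using s 1 A by auto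
        then show "1 < (s + A)\<^sup>2 + (y - of_int k*T)\<^sup>2" by (auto intro!: sq_gt1')
      qed
      also have "\<dots> = g (0,0)" by (rule base) (use A in auto)
      finally show ?thesis .
    next
      case 2
      have "g (x,y) = g (0,y)"
      proof (rule gh', intro allI impI hor)
        fix s assume s: "min x 0 \<le> s \<and> s \<le> max x 0"
        have "(x + A)\<^sup>2 \<le> (s + A)\<^sup>2" using s 2 by (intro sq_mono_abs) auto
        then show "1 < (s + A)\<^sup>2 + (y - of_int k*T)\<^sup>2" using gk by auto
        have "1 < \<bar>s - A\<bar>" using s 2 A by auto
        then show "1 < (s - A)\<^sup>2 + (y - of_int k*T)\<^sup>2" by (auto intro!: sq_gt1')
      qed
      also have "\<dots> = g (0,0)" by (rule base) (use A in auto)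
      finally show ?thesis .
    next
      case 3
      have "g (x,y) = g (max x (2*A+1),y)"
      proof (rule gh', intro allI impI hor)
        fix s assume s: "min x (max x (2*A+1)) \<le> s \<and> s \<le> max x (max x (2*A+1))"
        have "(x - A)\<^sup>2 \<le> (s - A)\<^sup>2" using s 3 by (intro sq_mono_abs) auto
        then show "1 < (s - A)\<^sup>2 + (y - of_int k*T)\<^sup>2" using gk by auto
        have "1 < \<bar>s + A\<bar>" using s 3 A by auto
        then show "1 < (s + A)\<^sup>2 + (y - of_int k*T)\<^sup>2" by (auto intro!: sq_gt1')
      qed
      also have "\<dots> = g (0,0)" by (rule base) (use A in auto)
      finally show ?thesis .
    next
      case 4
      have "g (x,y) = g (min x (-2*A-1),y)"
      proof (rule gh', intro allI impI hor)
        fix s assume s: "min x (min x (-2*A-1)) \<le> s \<and> s \<le> max x (min x (-2*A-1))"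
        have "(x + A)\<^sup>2 \<le> (s + A)\<^sup>2" using s 4 by (intro sq_mono_abs) auto
        then show "1 < (s + A)\<^sup>2 + (y - of_int k*T)\<^sup>2" using gk by auto
        have "1 < \<bar>s - A\<bar>" using s 4 A by auto
        then show "1 < (s - A)\<^sup>2 + (y - of_int k*T)\<^sup>2" by (auto intro!: sq_gt1')
      qed
      also have "\<dots> = g (0,0)" by (rule base) (use A in auto)
      finally show ?thesis .
    qed
  qed
qed



definition cents :: "real \<Rightarrow> real \<Rightarrow> (real \<times> real) set" where
  "cents \<epsilon> \<delta> = range (cL \<epsilon> \<delta>) \<union> range (cR \<epsilon> \<delta>)"

lemma cents_shift:
  assumes "c \<in> cents \<epsilon> \<delta>"
  shows "c + (0, 2+\<delta>) \<in> cents \<epsilon> \<delta> \<and> c - (0, 2+\<delta>) \<in> cents \<epsilon> \<delta>"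
proof -
  obtain n where "c = cL \<epsilon> \<delta> n \<or> c = cR \<epsilon> \<delta> n" using assms unfolding cents_def by auto
  moreover have "cL \<epsilon> \<delta> n + (0, 2 + \<delta>) = cL \<epsilon> \<delta> (n+1)" "cR \<epsilon> \<delta> n + (0, 2 + \<delta>) = cR \<epsilon> \<delta> (n+1)"
     "cL \<epsilon> \<delta> n - (0, 2 + \<delta>) = cL \<epsilon> \<delta> (n-1)" "cR \<epsilon> \<delta> n - (0, 2 + \<delta>) = cR \<epsilon> \<delta> (n-1)"
    by (simp_all add: cL_def cR_def algebra_simps)
  ultimately show ?thesis unfolding cents_def by auto
qed

lemma cents_sep:
  assumes "\<epsilon> > 0" "\<delta> > 0" "c \<in> cents \<epsilon> \<delta>" "c' \<in> cents \<epsilon> \<delta>" "c \<noteq> c'"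
  shows "2 + min \<epsilon> \<delta> \<le> dist c c'"
proof -
  have f: "\<bar>fst c - fst c'\<bar> \<le> dist c c'" using dist_fst_le[of c c'] by (simp add: dist_real_def)
  have s: "\<bar>snd c - snd c'\<bar> \<le> dist c c'" using dist_snd_le[of c c'] by (simp add: dist_real_def)
  obtain n where n: "c = cL \<epsilon> \<delta> n \<or> c = cR \<epsilon> \<delta> n" using assms unfolding cents_def by auto
  obtain m where m: "c' = cL \<epsilon> \<delta> m \<or> c' = cR \<epsilon> \<delta> m" using assms unfolding cents_def by auto
  have rs: "2 + \<delta> \<le> \<bar>of_int n * (2+\<delta>) - of_int m * (2+\<delta>)\<bar>" if "n \<noteq> m"
    using rowsep[OF that] assms by simp
  show ?thesis
  proof (cases "n = m")
    case True
    then have "(c = cL \<epsilon> \<delta> n \<and> c' = cR \<epsilon> \<delta> n) \<or> (c = cR \<epsilon> \<delta> n \<and> c' = cL \<epsilon> \<delta> n)"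
      using n m assms(5) by auto
    then have "\<bar>fst c - fst c'\<bar> = 2 + \<epsilon>" unfolding cL_def cR_def using assms by auto
    then show ?thesis using f by linarith
  next
    case False
    then have "2 + \<delta> \<le> \<bar>snd c - snd c'\<bar>" using n m rs unfolding cL_def cR_def by auto
    then show ?thesis using s by linarith
  qed
qed

lemma goodxy_cents:
  "goodxy \<epsilon> \<delta> x y \<longleftrightarrow> (\<forall>c\<in>cents \<epsilon> \<delta>. 1 < dist (x,y) c)"
proof -
  have eL: "1 < dist (x,y) (cL \<epsilon> \<delta> n) \<longleftrightarrow> 1 < (x + (1+\<epsilon>/2))\<^sup>2 + (y - of_int n*(2+\<delta>))\<^sup>2" for n
    unfolding cL_def dist_gt1 by (simp add: algebra_simps)
  have eR: "1 < dist (x,y) (cR \<epsilon> \<delta> n) \<longleftrightarrow> 1 < (x - (1+\<epsilon>/2))\<^sup>2 + (y - of_int n*(2+\<delta>))\<^sup>2" for n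
    unfolding cR_def dist_gt1 by (simp add: algebra_simps)
  have "goodxy \<epsilon> \<delta> x y \<longleftrightarrow> (\<forall>n. 1 < dist (x,y) (cL \<epsilon> \<delta> n) \<and> 1 < dist (x,y) (cR \<epsilon> \<delta> n))"
    unfolding goodxy_def eL eR by blast
  also have "\<dots> \<longleftrightarrow> (\<forall>c\<in>cents \<epsilon> \<delta>. 1 < dist (x,y) c)" unfolding cents_def by blast
  finally show ?thesis .
qed

lemma notdisks_cents:
  "p \<notin> disks \<epsilon> \<delta> \<longleftrightarrow> (\<forall>c\<in>cents \<epsilon> \<delta>. 1 \<le> dist p c)"
  unfolding disks_def cents_def by (auto simp: dist_commute not_less)

lemma line_const_v:
  fixes g :: "real \<times> real \<Rightarrow> real"
  assumes "\<And>p. p \<in> S \<Longrightarrow> (g has_derivative (\<lambda>h. 0)) (at p)" "a \<le> b" "\<forall>t\<in>{a..b}. (x,t) \<in> S"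
  shows "g (x,a) = g (x,b)"
proof -
  have "((\<lambda>t. g (x,t)) has_derivative (\<lambda>h. 0)) (at t within {a..b})" if "t \<in> {a..b}" for t
  proof -
    have h: "((\<lambda>t. (x,t)) has_derivative (\<lambda>s. (0,s))) (at t)" by (auto intro!: derivative_eq_intros)
    have "((\<lambda>t. g (x,t)) has_derivative (\<lambda>h. 0)) (at t)"
      using has_derivative_compose[OF h assms(1)[of "(x,t)"]] assms(3) that by (simp add: o_def)
    then show ?thesis by (rule has_derivative_at_withinI)
  qed
  then obtain c where "\<forall>t\<in>{a..b}. g (x,t) = c" using has_derivative_zero_constant[of "{a..b}"] by blast
  then show ?thesis using assms(2) by auto
qed

lemma line_const_h:
  fixes g :: "real \<times> real \<Rightarrow> real"
  assumes "\<And>p. p \<in> S \<Longrightarrow> (g has_derivative (\<lambda>h. 0)) (at p)" "a \<le> b" "\<forall>t\<in>{a..b}. (t,y) \<in> S"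
  shows "g (a,y) = g (b,y)"
proof -
  have "((\<lambda>t. g (t,y)) has_derivative (\<lambda>h. 0)) (at t within {a..b})" if "t \<in> {a..b}" for t
  proof -
    have h: "((\<lambda>t. (t,y)) has_derivative (\<lambda>s. (s,0))) (at t)" by (auto intro!: derivative_eq_intros)
    have "((\<lambda>t. g (t,y)) has_derivative (\<lambda>h. 0)) (at t)"
      using has_derivative_compose[OF h assms(1)[of "(t,y)"]] assms(3) that by (simp add: o_def)
    then show ?thesis by (rule has_derivative_at_withinI)
  qed
  then obtain c where "\<forall>t\<in>{a..b}. g (t,y) = c" using has_derivative_zero_constant[of "{a..b}"] by blast
  then show ?thesis using assms(2) by auto
qed


lemma shift_zero_deriv:
  fixes u :: "real \<times> real \<Rightarrow> real"
  assumes "u differentiable (at (x,y))" "u differentiable (at (x, y + 2 + \<delta>))"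
    "px u (x,y) = px u (x, y + 2 + \<delta>)" "py u (x,y) = py u (x, y + 2 + \<delta>)"
  shows "((\<lambda>p. u (fst p, snd p + 2 + \<delta>) - u p) has_derivative (\<lambda>h. 0)) (at (x,y))"
proof -
  have d0: "(u has_derivative (\<lambda>h. px u (x,y) * fst h + py u (x,y) * snd h)) (at (x,y))"
    by (rule diff_partials[OF assms(1)])
  have d1: "(u has_derivative (\<lambda>h. px u (x, y + 2 + \<delta>) * fst h + py u (x, y + 2 + \<delta>) * snd h)) (at (x, y + 2 + \<delta>))"
    by (rule diff_partials[OF assms(2)])
  have sh: "((\<lambda>p. (fst p, snd p + 2 + \<delta>)) has_derivative (\<lambda>h. (fst h, snd h))) (at (x,y))"
    by (auto intro!: derivative_eq_intros)
  have c: "((\<lambda>p. u (fst p, snd p + 2 + \<delta>)) has_derivative (\<lambda>h. px u (x, y + 2 + \<delta>) * fst h + py u (x, y + 2 + \<delta>) * snd h)) (at (x,y))"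
    using has_derivative_compose[OF sh, of u] d1 by (simp add: o_def)
  have "((\<lambda>p. u (fst p, snd p + 2 + \<delta>) - u p) has_derivative (\<lambda>h. (px u (x, y + 2 + \<delta>) * fst h + py u (x, y + 2 + \<delta>) * snd h) - (px u (x,y) * fst h + py u (x,y) * snd h))) (at (x,y))"
    by (rule has_derivative_diff[OF c d0])
  then show ?thesis using assms(3,4) by simp
qed

lemma goodxy_shift:
  assumes "goodxy \<epsilon> \<delta> x y"
  shows "goodxy \<epsilon> \<delta> x (y + 2 + \<delta>)"
  unfolding goodxy_cents
proof
  fix c assume c: "c \<in> cents \<epsilon> \<delta>"
  obtain c1 c2 where cc: "c = (c1,c2)" by (cases c)
  have "c - (0, 2+\<delta>) \<in> cents \<epsilon> \<delta>" using cents_shift[OF c] by simp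
  then have "1 < dist (x,y) (c1, c2 - (2+\<delta>))" using assms cc unfolding goodxy_cents by auto
  moreover have "dist (x, y + 2 + \<delta>) (c1,c2) = dist (x,y) (c1, c2 - (2+\<delta>))"
    by (simp add: dist_Pair_Pair dist_real_def algebra_simps)
  ultimately show "1 < dist (x, y + 2 + \<delta>) c" using cc by simp
qed

lemma u_shift_const:
  fixes u :: "real \<times> real \<Rightarrow> real"
  assumes ep: "\<epsilon> > 0" and de: "\<delta> > 0"
    and dif: "\<forall>p. p \<notin> closure (disks \<epsilon> \<delta>) \<longrightarrow> u differentiable (at p)"
    and per: "\<forall>x y. (x,y) \<notin> closure (disks \<epsilon> \<delta>) \<longrightarrow> px u (x,y) = px u (x, y+2+\<delta>) \<and> py u (x,y) = py u (x,y+2+\<delta>)"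
  shows "\<forall>x y. goodxy \<epsilon> \<delta> x y \<longrightarrow> u (x, y + 2 + \<delta>) - u (x,y) = u (0, 0 + 2 + \<delta>) - u (0,0)"
proof (intro allI impI)
  fix x y assume gxy: "goodxy \<epsilon> \<delta> x y"
  define g where "g = (\<lambda>p::real\<times>real. u (fst p, snd p + 2 + \<delta>) - u p)"
  define S where "S = {p. goodxy \<epsilon> \<delta> (fst p) (snd p)}"
  have inS: "p \<notin> closure (disks \<epsilon> \<delta>)" if "p \<in> S" for p
    using that S_iff[OF de, of "fst p" "snd p"] unfolding S_def by auto
  have D: "(g has_derivative (\<lambda>h. 0)) (at p)" if "p \<in> S" for p
  proof -
    obtain a b where p: "p = (a,b)" by (cases p)
    have g1: "goodxy \<epsilon> \<delta> a b" using that p S_def by auto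
    have g2: "goodxy \<epsilon> \<delta> a (b + 2 + \<delta>)" by (rule goodxy_shift[OF g1])
    have n1: "(a,b) \<notin> closure (disks \<epsilon> \<delta>)" using S_iff[OF de] g1 by blast
    have n2: "(a,b + 2 + \<delta>) \<notin> closure (disks \<epsilon> \<delta>)" using S_iff[OF de] g2 by blast
    show ?thesis unfolding g_def p
      by (rule shift_zero_deriv) (use dif per n1 n2 in auto)
  qed
  have "g (x,y) = g (0,0)"
  proof (rule path_const[OF ep de _ _ gxy])
    fix x' a b assume "a \<le> b" "\<forall>t\<in>{a..b}. goodxy \<epsilon> \<delta> x' t"
    then show "g (x',a) = g (x',b)" by (intro line_const_v[where S=S and g=g]) (auto simp: S_def intro: D)
  next
    fix y' a b assume "a \<le> b" "\<forall>s\<in>{a..b}. goodxy \<epsilon> \<delta> s y'"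
    then show "g (a,y') = g (b,y')" by (intro line_const_h[where S=S and g=g]) (auto simp: S_def intro: D)
  qed
  then show "u (x, y + 2 + \<delta>) - u (x,y) = u (0, 0 + 2 + \<delta>) - u (0,0)" unfolding g_def by simp
qed

lemma H_shift_const:
  fixes H :: "real \<times> real \<Rightarrow> real"
  assumes dif: "\<forall>p. H differentiable (at p)"
    and per: "\<forall>x y. px H (x,y) = px H (x, y+2+\<delta>) \<and> py H (x,y) = py H (x,y+2+\<delta>)"
  shows "H (x, y + 2 + \<delta>) - H (x,y) = H (0, 1 + \<delta>/2) - H (0, -1 - \<delta>/2)"
proof -
  define g where "g = (\<lambda>p::real\<times>real. H (fst p, snd p + 2 + \<delta>) - H p)"
  have D: "(g has_derivative (\<lambda>h. 0)) (at p within UNIV)" for p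
  proof -
    obtain a b where p: "p = (a,b)" by (cases p)
    show ?thesis unfolding g_def p
      by (rule shift_zero_deriv) (use dif per in auto)
  qed
  obtain c where "\<forall>p\<in>UNIV. g p = c" using has_derivative_zero_constant[OF convex_UNIV D] by blast
  then have "g (x,y) = g (0, -1 - \<delta>/2)" by simp
  moreover have e: "(0::real, -1 - \<delta>/2 + 2 + \<delta>) = (0, 1 + \<delta>/2)" by simp
  ultimately show ?thesis unfolding g_def by (simp only: fst_conv snd_conv e)
qed


lemma shift_eq: "x + (0::real, 2+\<delta>) = (fst x, snd x + 2 + \<delta>)"
  by (cases x) (simp add: algebra_simps)

lemma sphere_shift:
  fixes u :: "real \<times> real \<Rightarrow> real"
  assumes ep: "\<epsilon> > 0" and de: "\<delta> > 0"
    and cont: "continuous_on (- disks \<epsilon> \<delta>) u"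
    and sh: "\<forall>x y. goodxy \<epsilon> \<delta> x y \<longrightarrow> u (x, y + 2 + \<delta>) - u (x,y) = cu"
    and c: "c \<in> cents \<epsilon> \<delta>" and p: "dist p c = 1"
  shows "u (fst p, snd p + 2 + \<delta>) = u p + cu"
proof -
  define m where "m = min \<epsilon> \<delta>"
  have m: "m > 0" using ep de m_def by auto
  define e where "e = (0::real, 2+\<delta>)"
  have other: "1 + m \<le> dist p c'" if "c' \<in> cents \<epsilon> \<delta>" "c' \<noteq> c" for c'
  proof -
    have "2 + m \<le> dist c c'" using cents_sep[OF ep de c that(1)] that(2) m_def by auto
    also have "\<dots> \<le> dist c p + dist p c'" by (rule dist_triangle)
    finally show ?thesis using p by (simp add: dist_commute)
  qed
  have pin: "p \<in> - disks \<epsilon> \<delta>"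
  proof -
    have "\<forall>c'\<in>cents \<epsilon> \<delta>. 1 \<le> dist p c'"
      using other p m by (metis less_eq_real_def add_less_same_cancel1 not_less order_trans)
    then show ?thesis using notdisks_cents by blast
  qed
  have pin': "p + e \<in> - disks \<epsilon> \<delta>"
  proof -
    have "1 \<le> dist (p + e) c'" if "c' \<in> cents \<epsilon> \<delta>" for c'
    proof -
      have "c' - e \<in> cents \<epsilon> \<delta>" using cents_shift[OF that] e_def by simp
      then have "1 \<le> dist p (c' - e)" using pin notdisks_cents by blast
      moreover have "dist (p + e) c' = dist p (c' - e)"
        by (simp add: dist_norm algebra_simps)
      ultimately show ?thesis by simp
    qed
    then show ?thesis using notdisks_cents by blast
  qed
  define q where "q = (\<lambda>s::real. p + s *\<^sub>R (p - c))"
  have qgood: "goodxy \<epsilon> \<delta> (fst (q s)) (snd (q s))" if "0 < s" "s < m" for s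
    unfolding goodxy_cents
  proof
    fix c' assume c': "c' \<in> cents \<epsilon> \<delta>"
    have dq: "dist p (q s) = s" using that p unfolding q_def by (simp add: dist_norm dist_commute)
    show "1 < dist (fst (q s), snd (q s)) c'"
    proof (cases "c' = c")
      case True
      have "q s - c = (1 + s) *\<^sub>R (p - c)" unfolding q_def by (simp add: algebra_simps)
      then have "dist (q s) c = 1 + s" using p that by (simp add: dist_norm dist_commute)
      then show ?thesis using True that by simp
    next
      case False
      have "dist p c' \<le> dist p (q s) + dist (q s) c'" by (rule dist_triangle)
      then show ?thesis using other[OF c' False] dq that by simp
    qed
  qed
  have ev: "eventually (\<lambda>s. 0 < s \<and> s < m) (at_right (0::real))"
    using eventually_at_right_real[OF m] by (simp add: greaterThanLessThan_iff)
  have evS: "eventually (\<lambda>s. goodxy \<epsilon> \<delta> (fst (q s)) (snd (q s))) (at_right (0::real))"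
    using ev by eventually_elim (use qgood in auto)
  have evD: "eventually (\<lambda>s. q s \<in> - disks \<epsilon> \<delta>) (at_right (0::real))"
    using evS
  proof eventually_elim
    case (elim s)
    then have "(fst (q s), snd (q s)) \<notin> closure (disks \<epsilon> \<delta>)" using S_iff[OF de] by blast
    then show ?case using closure_subset by auto
  qed
  have evD': "eventually (\<lambda>s. q s + e \<in> - disks \<epsilon> \<delta>) (at_right (0::real))"
    using evS
  proof eventually_elim
    case (elim s)
    then have "goodxy \<epsilon> \<delta> (fst (q s)) (snd (q s) + 2 + \<delta>)" by (rule goodxy_shift)
    then have "(fst (q s), snd (q s) + 2 + \<delta>) \<notin> closure (disks \<epsilon> \<delta>)" using S_iff[OF de] by blast
    then show ?case using closure_subset shift_eq[of "q s" \<delta>] e_def by auto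
  qed
  have tq: "(q \<longlongrightarrow> p) (at_right 0)"
  proof -
    have "((\<lambda>s. p + s *\<^sub>R (p - c)) \<longlongrightarrow> p + 0 *\<^sub>R (p - c)) (at_right 0)"
      by (intro tendsto_intros)
    then show ?thesis unfolding q_def by simp
  qed
  have tq': "((\<lambda>s. q s + e) \<longlongrightarrow> p + e) (at_right 0)"
    by (intro tendsto_intros tq)
  have l1: "((\<lambda>s. u (q s)) \<longlongrightarrow> u p) (at_right 0)"
    by (rule continuous_on_tendsto_compose[OF cont tq pin evD])
  have l2: "((\<lambda>s. u (q s + e)) \<longlongrightarrow> u (p + e)) (at_right 0)"
    by (rule continuous_on_tendsto_compose[OF cont tq' pin' evD'])
  have l3: "((\<lambda>s. u (q s + e) - u (q s)) \<longlongrightarrow> u (p + e) - u p) (at_right 0)"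
    by (intro tendsto_intros l1 l2)
  have "eventually (\<lambda>s. u (q s + e) - u (q s) = cu) (at_right (0::real))"
    using evS
  proof eventually_elim
    case (elim s)
    then have "u (fst (q s), snd (q s) + 2 + \<delta>) - u (fst (q s), snd (q s)) = cu" using sh by blast
    then show ?case using shift_eq[of "q s" \<delta>] e_def by simp
  qed
  then have "((\<lambda>s. u (q s + e) - u (q s)) \<longlongrightarrow> cu) (at_right 0)" by (rule tendsto_eventually)
  then have "u (p + e) - u p = cu" using l3 tendsto_unique[OF trivial_limit_at_right_real] by blast
  then show ?thesis using shift_eq[of p \<delta>] e_def by simp
qed


lemma box_Pair_eq2: "box (a::real, c::real) (b, d) = box a b \<times> box c d"
  by (force simp: box_def Basis_prod_def)

lemma energy_zero:
  fixes u H :: "real \<times> real \<Rightarrow> real" and \<epsilon> \<delta> cu cH :: real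
  assumes ep: "\<epsilon> > 0" and de: "\<delta> > 0"
   and difu: "\<forall>p. p \<notin> closure (disks \<epsilon> \<delta>) \<longrightarrow> u differentiable (at p)"
   and cpu: "continuous_on (- closure (disks \<epsilon> \<delta>)) (py u)"
   and difH: "\<forall>p. H differentiable (at p)"
   and cpH: "continuous_on UNIV (py H)"
   and shu: "\<forall>x y. goodxy \<epsilon> \<delta> x y \<longrightarrow> u (x, y+2+\<delta>) - u (x,y) = cu"
   and shH: "\<forall>x y. H (x, y+2+\<delta>) - H (x,y) = cH"
   and fin: "(\<integral>\<^sup>+ p. ennreal (indicator (strip \<delta> - closure (ball (cL \<epsilon> \<delta> 0) 1 \<union> ball (cR \<epsilon> \<delta> 0) 1)) p
            * ((px u p - px H p)\<^sup>2 + (py u p - py H p)\<^sup>2)) \<partial>lborel) < \<infinity>"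
  shows "cu = cH"
proof (rule ccontr)
  assume ne: "cu \<noteq> cH"
  define d where "d = cu - cH"
  define a where "a = -1 - \<delta>/2"
  define b where "b = 1 + \<delta>/2"
  define T where "T = 2 + \<delta>"
  define X0 where "X0 = 3 + \<epsilon>"
  define k where "k = d / T"
  have T: "T > 0" using de T_def by simp
  have hab: "b - a = T" "a \<le> b" "a + 2 + \<delta> = b" using de unfolding a_def b_def T_def by auto
  have d2: "d\<^sup>2 > 0" using ne d_def by simp
  have goodX: "goodxy \<epsilon> \<delta> x t" if "X0 \<le> x" for x t
    unfolding goodxy_def
  proof
    fix n :: int
    have "1 < \<bar>x - (1+\<epsilon>/2)\<bar>" "1 < \<bar>x + (1+\<epsilon>/2)\<bar>" using that ep X0_def by auto
    then show "1 < (x - (1+\<epsilon>/2))\<^sup>2 + (t - of_int n*(2+\<delta>))\<^sup>2 \<and> 1 < (x + (1+\<epsilon>/2))\<^sup>2 + (t - of_int n*(2+\<delta>))\<^sup>2"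
      by (auto intro!: sq_gt1')
  qed
  have inS: "(x,t) \<notin> closure (disks \<epsilon> \<delta>)" if "X0 \<le> x" for x t
    using S_iff[OF de] goodX[OF that] by blast
  define f where "f = (\<lambda>p. py u p - py H p)"
  have sub: "{p. X0 \<le> fst p} \<subseteq> - closure (disks \<epsilon> \<delta>)" using inS by auto
  have contf: "continuous_on {p. X0 \<le> fst p} f"
    unfolding f_def
    by (intro continuous_on_diff continuous_on_subset[OF cpu sub] continuous_on_subset[OF cpH]) auto
  have ftc: "((\<lambda>t. f (x,t)) has_integral d) {a..b}" if "X0 \<le> x" for x
  proof -
    have der: "((\<lambda>t. u (x,t) - H (x,t)) has_vector_derivative f (x,t)) (at t within {a..b})" for t
    proof -
      have h: "((\<lambda>t. (x,t)) has_derivative (\<lambda>s. (0,s))) (at t)" by (auto intro!: derivative_eq_intros)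
      have du: "(u has_derivative (\<lambda>h. px u (x,t) * fst h + py u (x,t) * snd h)) (at (x,t))"
        by (rule diff_partials) (use difu inS[OF that] in auto)
      have dH: "(H has_derivative (\<lambda>h. px H (x,t) * fst h + py H (x,t) * snd h)) (at (x,t))"
        by (rule diff_partials) (use difH in auto)
      have cu': "((\<lambda>t. u (x,t)) has_derivative (\<lambda>s. py u (x,t) * s)) (at t)"
        using has_derivative_compose[OF h du] by (simp add: o_def)
      have cH': "((\<lambda>t. H (x,t)) has_derivative (\<lambda>s. py H (x,t) * s)) (at t)"
        using has_derivative_compose[OF h dH] by (simp add: o_def)
      have "((\<lambda>t. u (x,t) - H (x,t)) has_derivative (\<lambda>s. py u (x,t) * s - py H (x,t) * s)) (at t)"
        by (rule has_derivative_diff[OF cu' cH'])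
      moreover have "(\<lambda>s. py u (x,t) * s - py H (x,t) * s) = (\<lambda>s. s *\<^sub>R f (x,t))"
        by (rule ext) (simp add: f_def algebra_simps)
      ultimately show ?thesis unfolding has_vector_derivative_def
        by (simp add: has_derivative_at_withinI)
    qed
    have "((\<lambda>t. f (x,t)) has_integral ((u (x,b) - H (x,b)) - (u (x,a) - H (x,a)))) {a..b}"
      by (rule fundamental_theorem_of_calculus[where f'="\<lambda>t. f (x,t)", OF hab(2)]) (use der in auto)
    moreover have "u (x,b) - u (x,a) = cu" using shu goodX[OF that, of a] hab(3) by auto
    moreover have "H (x,b) - H (x,a) = cH" using shH hab(3) by metis
    ultimately show ?thesis by (simp add: d_def algebra_simps)
  qed
  have inner: "((\<lambda>t. 2*k*f (x,t) - k\<^sup>2) has_integral (d\<^sup>2/T)) {a..b}" if "X0 \<le> x" for x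
  proof -
    have i1: "((\<lambda>t. 2*k*f (x,t)) has_integral (2*k*d)) {a..b}"
      using has_integral_mult_right[OF ftc[OF that], of "2*k"] by simp
    have i2: "((\<lambda>t. k\<^sup>2) has_integral (T * k\<^sup>2)) {a..b}"
      using has_integral_const_real[of "k\<^sup>2" a b] hab by simp
    have "((\<lambda>t. 2*k*f (x,t) - k\<^sup>2) has_integral (2*k*d - T * k\<^sup>2)) {a..b}"
      by (rule has_integral_diff[OF i1 i2])
    moreover have "2*k*d - T * k\<^sup>2 = d\<^sup>2/T" using T unfolding k_def by (simp add: field_simps power2_eq_square)
    ultimately show ?thesis by simp
  qed
  obtain r where r: "0 \<le> r" and rfin: "(\<integral>\<^sup>+ p. ennreal (indicator (strip \<delta> - closure (ball (cL \<epsilon> \<delta> 0) 1 \<union> ball (cR \<epsilon> \<delta> 0) 1)) p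
            * ((px u p - px H p)\<^sup>2 + (py u p - py H p)\<^sup>2)) \<partial>lborel) = ennreal r"
    using fin by (cases rule: ennreal_cases) auto
  have bound: "N * (d\<^sup>2/T) \<le> r" if N: "N > 0" for N
  proof -
    define Kc where "Kc = cbox (X0, a) (X0+N, b)"
    have Ksub: "Kc \<subseteq> {p. X0 \<le> fst p}" unfolding Kc_def by (auto simp: cbox_Pair_eq)
    have contF: "continuous_on Kc (\<lambda>p. (f p)\<^sup>2)"
      by (intro continuous_intros continuous_on_subset[OF contf Ksub])
    have contG: "continuous_on Kc (\<lambda>p. 2*k*f p - k\<^sup>2)"
      by (intro continuous_intros continuous_on_subset[OF contf Ksub])
    have "integral Kc (\<lambda>p. 2*k*f p - k\<^sup>2) = integral (cbox X0 (X0+N)) (\<lambda>x. integral (cbox a b) (\<lambda>y. 2*k*f (x,y) - k\<^sup>2))"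
      unfolding Kc_def by (rule integral_prod_continuous[OF contG[unfolded Kc_def]])
    also have "\<dots> = integral {X0..X0+N} (\<lambda>x. d\<^sup>2/T)"
      unfolding cbox_interval
      by (rule integral_cong) (use inner integral_unique in auto)
    also have "\<dots> = N * (d\<^sup>2/T)" using N by simp
    finally have IG: "integral Kc (\<lambda>p. 2*k*f p - k\<^sup>2) = N * (d\<^sup>2/T)" .
    have "integral Kc (\<lambda>p. 2*k*f p - k\<^sup>2) \<le> integral Kc (\<lambda>p. (f p)\<^sup>2)"
    proof (rule integral_le)
      show "(\<lambda>p. 2*k*f p - k\<^sup>2) integrable_on Kc" unfolding Kc_def by (rule integrable_continuous[OF contG[unfolded Kc_def]])
      show "(\<lambda>p. (f p)\<^sup>2) integrable_on Kc" unfolding Kc_def by (rule integrable_continuous[OF contF[unfolded Kc_def]])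
      fix p show "2*k*f p - k\<^sup>2 \<le> (f p)\<^sup>2"
        using zero_le_power2[of "f p - k"] by (simp add: power2_eq_square algebra_simps)
    qed
    then have IF: "N * (d\<^sup>2/T) \<le> integral Kc (\<lambda>p. (f p)\<^sup>2)" using IG by simp
    define B where "B = box (X0, a) (X0+N, b)"
    have hasF: "((\<lambda>p. (f p)\<^sup>2) has_integral integral Kc (\<lambda>p. (f p)\<^sup>2)) B"
      unfolding B_def has_integral_open_interval
      using integrable_continuous[OF contF[unfolded Kc_def]] Kc_def by (simp add: integrable_integral)
    have nn: "(\<integral>\<^sup>+ p. ennreal ((f p)\<^sup>2) * indicator B p \<partial>lborel) = ennreal (integral Kc (\<lambda>p. (f p)\<^sup>2))"
      by (rule nn_integral_has_integral_lebesgue'[OF _ hasF]) simp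
    have "(\<integral>\<^sup>+ p. ennreal ((f p)\<^sup>2) * indicator B p \<partial>lborel) \<le>
      (\<integral>\<^sup>+ p. ennreal (indicator (strip \<delta> - closure (ball (cL \<epsilon> \<delta> 0) 1 \<union> ball (cR \<epsilon> \<delta> 0) 1)) p
            * ((px u p - px H p)\<^sup>2 + (py u p - py H p)\<^sup>2)) \<partial>lborel)"
    proof (rule nn_integral_mono)
      fix p :: "real \<times> real"
      obtain x y where p: "p = (x,y)" by (cases p)
      show "ennreal ((f p)\<^sup>2) * indicator B p \<le> ennreal (indicator (strip \<delta> - closure (ball (cL \<epsilon> \<delta> 0) 1 \<union> ball (cR \<epsilon> \<delta> 0) 1)) p
            * ((px u p - px H p)\<^sup>2 + (py u p - py H p)\<^sup>2))"
      proof (cases "p \<in> B")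
        case False then show ?thesis by simp
      next
        case True
        then have xy: "X0 < x" "a < y" "y < b" unfolding B_def p box_Pair_eq2 by auto
        have "p \<in> strip \<delta>" unfolding strip_def p using xy a_def b_def by auto
        moreover have "1 < dist p (cL \<epsilon> \<delta> 0)" "1 < dist p (cR \<epsilon> \<delta> 0)"
        proof -
          have "\<bar>x - fst (cL \<epsilon> \<delta> 0)\<bar> \<le> dist p (cL \<epsilon> \<delta> 0)" "\<bar>x - fst (cR \<epsilon> \<delta> 0)\<bar> \<le> dist p (cR \<epsilon> \<delta> 0)"
            using dist_fst_le[of p "cL \<epsilon> \<delta> 0"] dist_fst_le[of p "cR \<epsilon> \<delta> 0"] p by (auto simp: dist_real_def)
          moreover have "1 < \<bar>x - fst (cL \<epsilon> \<delta> 0)\<bar>" "1 < \<bar>x - fst (cR \<epsilon> \<delta> 0)\<bar>"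
            using xy ep X0_def unfolding cL_def cR_def by auto
          ultimately show "1 < dist p (cL \<epsilon> \<delta> 0)" "1 < dist p (cR \<epsilon> \<delta> 0)" by linarith+
        qed
        then have "p \<notin> closure (ball (cL \<epsilon> \<delta> 0) 1 \<union> ball (cR \<epsilon> \<delta> 0) 1)"
          by (simp add: closure_Un dist_commute)
        ultimately show ?thesis using True by (auto simp: f_def intro!: ennreal_leI)
      qed
    qed
    then have "ennreal (integral Kc (\<lambda>p. (f p)\<^sup>2)) \<le> ennreal r" using nn rfin by simp
    then have "integral Kc (\<lambda>p. (f p)\<^sup>2) \<le> r" using r ennreal_le_iff by blast
    then show ?thesis using IF by simp
  qed
  define N where "N = (r + 1) * T / d\<^sup>2"
  have "N > 0" unfolding N_def using r T d2 by simp
  then have "N * (d\<^sup>2/T) \<le> r" by (rule bound)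
  moreover have "N * (d\<^sup>2/T) = r + 1" unfolding N_def using T d2 by (simp add: field_simps)
  ultimately show False by simp
qed


lemma sphere_vals:
  fixes u :: "real \<times> real \<Rightarrow> real" and c :: "int \<Rightarrow> real \<times> real"
  assumes step: "\<And>n p. dist (c n) p = 1 \<Longrightarrow> u (fst p, snd p + 2 + \<delta>) = u p + cu"
  and cd: "\<And>n x y. dist (c (n+1)) (x, y+2+\<delta>) = dist (c n) (x,y)"
  and base: "\<forall>p\<in>sphere (c 0) 1. u p = a0"
  shows "\<forall>p\<in>sphere (c n) 1. u p = a0 + of_int n * cu"
proof (induction n rule: int_induct[where k=0])
  case base then show ?case using assms(3) by simp
next
  case (step1 i)
  show ?case
  proof
    fix p assume p: "p \<in> sphere (c (i+1)) 1"
    obtain x y where pxy: "p = (x,y)" by (cases p)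
    define q where "q = (x, y - (2+\<delta>))"
    have "dist (c (i+1)) (x, (y - (2+\<delta>)) + 2 + \<delta>) = dist (c i) q" unfolding q_def by (rule cd)
    then have qs: "dist (c i) q = 1" using p pxy by simp
    then have "u q = a0 + of_int i * cu" using step1(2) by simp
    moreover have "u (fst q, snd q + 2 + \<delta>) = u q + cu" by (rule step[OF qs])
    moreover have "(fst q, snd q + 2 + \<delta>) = p" unfolding q_def pxy by simp
    ultimately show "u p = a0 + of_int (i+1) * cu" by (simp add: algebra_simps)
  qed
next
  case (step2 i)
  show ?case
  proof
    fix p assume p: "p \<in> sphere (c (i-1)) 1"
    obtain x y where pxy: "p = (x,y)" by (cases p)
    have "dist (c (i - 1 + 1)) (x, y + 2 + \<delta>) = dist (c (i-1)) (x,y)" by (rule cd)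
    then have qs: "dist (c i) (x, y + 2 + \<delta>) = 1" using p pxy by simp
    then have "u (x, y + 2 + \<delta>) = a0 + of_int i * cu" using step2(2) by simp
    moreover have "u (fst p, snd p + 2 + \<delta>) = u p + cu" by (rule step) (use p in simp)
    ultimately show "u p = a0 + of_int (i-1) * cu" using pxy by (simp add: algebra_simps)
  qed
qed

theorem proposition2p1:
  fixes \<epsilon> \<delta> :: real and H u :: "real \<times> real \<Rightarrow> real"
  assumes "\<epsilon> > 0" and "\<delta> > 0"
    and "harmonic_on UNIV H"
    and "\<forall>x y. px H (x, y) = px H (x, y + 2 + \<delta>) \<and> py H (x, y) = py H (x, y + 2 + \<delta>)"
    and "solution_for \<epsilon> \<delta> H u"
  shows "\<exists>aL aR :: int \<Rightarrow> real.
           (\<forall>n. \<forall>p\<in>sphere (cL \<epsilon> \<delta> n) 1. u p = aL n)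
         \<and> (\<forall>n. \<forall>p\<in>sphere (cR \<epsilon> \<delta> n) 1. u p = aR n)
         \<and> (\<forall>n. aR (n + 1) - aR n = H (0, 1 + \<delta>/2) - H (0, -1 - \<delta>/2)
               \<and> aL (n + 1) - aL n = H (0, 1 + \<delta>/2) - H (0, -1 - \<delta>/2))"
proof -
  note ep = assms(1) and de = assms(2)
  have harm: "harmonic_on (- closure (disks \<epsilon> \<delta>)) u"
    and cont: "continuous_on (- disks \<epsilon> \<delta>) u"
    and a0: "\<exists>a. \<forall>p\<in>sphere (cL \<epsilon> \<delta> 0) 1. u p = a"
    and b0: "\<exists>b. \<forall>p\<in>sphere (cR \<epsilon> \<delta> 0) 1. u p = b"
    and fin: "(\<integral>\<^sup>+ p. ennreal (indicator (strip \<delta> - closure (ball (cL \<epsilon> \<delta> 0) 1 \<union> ball (cR \<epsilon> \<delta> 0) 1)) p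
            * ((px u p - px H p)\<^sup>2 + (py u p - py H p)\<^sup>2)) \<partial>lborel) < \<infinity>"
    and per: "\<forall>x y. (x, y) \<notin> closure (disks \<epsilon> \<delta>) \<longrightarrow>
           px u (x, y) = px u (x, y + 2 + \<delta>) \<and> py u (x, y) = py u (x, y + 2 + \<delta>)"
    using assms(5) unfolding solution_for_def by blast+
  have difu: "\<forall>p. p \<notin> closure (disks \<epsilon> \<delta>) \<longrightarrow> u differentiable (at p)"
    using harm unfolding harmonic_on_def by auto
  have cpu: "continuous_on (- closure (disks \<epsilon> \<delta>)) (py u)"
    using harm unfolding harmonic_on_def
    by (intro continuous_at_imp_continuous_on ballI differentiable_imp_continuous_within) auto
  have difH: "\<forall>p. H differentiable (at p)" using assms(3) unfolding harmonic_on_def by auto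
  have cpH: "continuous_on UNIV (py H)"
    using assms(3) unfolding harmonic_on_def
    by (intro continuous_at_imp_continuous_on ballI differentiable_imp_continuous_within) auto
  define cu where "cu = u (0, 0 + 2 + \<delta>) - u (0,0)"
  define cH where "cH = H (0, 1 + \<delta>/2) - H (0, -1 - \<delta>/2)"
  have shu: "\<forall>x y. goodxy \<epsilon> \<delta> x y \<longrightarrow> u (x, y + 2 + \<delta>) - u (x,y) = cu"
    unfolding cu_def by (rule u_shift_const[OF ep de difu per])
  have shH: "\<forall>x y. H (x, y+2+\<delta>) - H (x,y) = cH"
    unfolding cH_def using H_shift_const[OF difH assms(4)] by blast
  have ceq: "cu = cH" by (rule energy_zero[OF ep de difu cpu difH cpH shu shH fin])
  obtain a where a: "\<forall>p\<in>sphere (cL \<epsilon> \<delta> 0) 1. u p = a" using a0 by blast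
  obtain b where b: "\<forall>p\<in>sphere (cR \<epsilon> \<delta> 0) 1. u p = b" using b0 by blast
  have inL: "cL \<epsilon> \<delta> n \<in> cents \<epsilon> \<delta>" for n unfolding cents_def by auto
  have inR: "cR \<epsilon> \<delta> n \<in> cents \<epsilon> \<delta>" for n unfolding cents_def by auto
  have L: "\<forall>p\<in>sphere (cL \<epsilon> \<delta> n) 1. u p = a + of_int n * cu" for n
  proof (rule sphere_vals[where c="cL \<epsilon> \<delta>" and \<delta>=\<delta>])
    fix n p assume "dist (cL \<epsilon> \<delta> n) p = 1"
    then show "u (fst p, snd p + 2 + \<delta>) = u p + cu"
      using sphere_shift[OF ep de cont shu inL] by (simp add: dist_commute)
  next
    fix n x y show "dist (cL \<epsilon> \<delta> (n+1)) (x, y+2+\<delta>) = dist (cL \<epsilon> \<delta> n) (x,y)"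
      by (simp add: cL_def dist_Pair_Pair dist_real_def algebra_simps)
  qed (rule a)
  have R: "\<forall>p\<in>sphere (cR \<epsilon> \<delta> n) 1. u p = b + of_int n * cu" for n
  proof (rule sphere_vals[where c="cR \<epsilon> \<delta>" and \<delta>=\<delta>])
    fix n p assume "dist (cR \<epsilon> \<delta> n) p = 1"
    then show "u (fst p, snd p + 2 + \<delta>) = u p + cu"
      using sphere_shift[OF ep de cont shu inR] by (simp add: dist_commute)
  next
    fix n x y show "dist (cR \<epsilon> \<delta> (n+1)) (x, y+2+\<delta>) = dist (cR \<epsilon> \<delta> n) (x,y)"
      by (simp add: cR_def dist_Pair_Pair dist_real_def algebra_simps)
  qed (rule b)
  show ?thesis
  proof (intro exI conjI allI)
    show "\<forall>p\<in>sphere (cL \<epsilon> \<delta> n) 1. u p = a + of_int n * cu" for n by (rule L)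
    show "\<forall>p\<in>sphere (cR \<epsilon> \<delta> n) 1. u p = b + of_int n * cu" for n by (rule R)
    show "b + of_int (n+1) * cu - (b + of_int n * cu) = H (0, 1 + \<delta>/2) - H (0, -1 - \<delta>/2)" for n
      using ceq cH_def by (simp add: algebra_simps)
    show "a + of_int (n+1) * cu - (a + of_int n * cu) = H (0, 1 + \<delta>/2) - H (0, -1 - \<delta>/2)" for n
      using ceq cH_def by (simp add: algebra_simps)
  qed
qed

end
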